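(* For every instance, the algorithm GC described in the context, given the pseudometric $d$, outputs (for any tie-breaking) a clustering that is $5$-FJR with respect to the centroid loss $\ell_i(C,x)=d(i,x)$.
   Context: Instance: finite nonempty set $\mathcal{N}$ of $n$ agents, finite nonempty set $\mathcal{M}$ of feasible centers, positive integer $k$, pseudometric $d$ on $\mathcal{N}\cup\mathcal{M}$. A clustering is $\mathcal{X}=\{(C_1,x_1),\dots,(C_k,x_k)\}$ with $C_t$ pairwise disjoint (some possibly empty), union $\mathcal{N}$, $x_t\in\mathcal{M}$; $\ell_i(\mathcal{X})=\ell_i(C_t,x_t)$ where $i\in C_t$. For $\alpha\ge1$, $\mathcal{X}$ is $\alpha$-FJR (with respect to losses $\ell_i$) if there is no $S\subseteq\mathcal{N}$ with $|S|\ge n/k$ and $y\in\mathcal{M}$ with $\alpha\,\ell_i(S,y)<\min_{j\in S}\ell_j(\mathcal{X})$ for all $i\in S$. Algorithm GC: maintain a set $U$ of uncaptured agents (initially $\mathcal{N}$) and a parameter $\delta$ increasing continuously from $0$. Whenever there exist an agent $i\in U$ and a set $C\subseteq U$ with $|C|\ge\min(|U|,n/k)$ and $d(i,i')\le\delta$ for all $i'\in C$, form the cluster $(C,x)$ with $x\in\arg\min_{x'\in\mathcal{M}}d(i,x')$ and set $U\leftarrow U\setminus C$. Stop when $U=\emptyset$; output the formed clusters (padded with empty clusters to $k$). *)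

theory Defs
  imports Main "HOL.Real"
begin

definition pseudometric_on :: "'a set \<Rightarrow> ('a \<Rightarrow> 'a \<Rightarrow> real) \<Rightarrow> bool" where
  "pseudometric_on A d \<longleftrightarrow>
     (\<forall>x\<in>A. d x x = 0) \<and>
     (\<forall>x\<in>A. \<forall>y\<in>A. d x y \<ge> 0) \<and>
     (\<forall>x\<in>A. \<forall>y\<in>A. d x y = d y x) \<and>
     (\<forall>x\<in>A. \<forall>y\<in>A. \<forall>z\<in>A. d x z \<le> d x y + d y z)"

definition is_clustering :: "'a set \<Rightarrow> 'a set \<Rightarrow> nat \<Rightarrow> ('a set \<times> 'a) list \<Rightarrow> bool" where
  "is_clustering N M k X \<longleftrightarrow>
     length X = k \<and>
     (\<forall>t<length X. \<forall>s<length X. t \<noteq> s \<longrightarrow> fst (X!t) \<inter> fst (X!s) = {}) \<and>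
     (\<Union>t<length X. fst (X!t)) = N \<and>
     (\<forall>t<length X. snd (X!t) \<in> M)"

definition agent_loss :: "('a \<Rightarrow> 'a set \<Rightarrow> 'a \<Rightarrow> real) \<Rightarrow> ('a set \<times> 'a) list \<Rightarrow> 'a \<Rightarrow> real" where
  "agent_loss L X i = (let t = (THE t. t < length X \<and> i \<in> fst (X!t)) in L i (fst (X!t)) (snd (X!t)))"

definition FJR :: "real \<Rightarrow> ('a \<Rightarrow> 'a set \<Rightarrow> 'a \<Rightarrow> real) \<Rightarrow> 'a set \<Rightarrow> 'a set \<Rightarrow> nat \<Rightarrow> ('a set \<times> 'a) list \<Rightarrow> bool" where
  "FJR \<alpha> L N M k X \<longleftrightarrow>
     \<not> (\<exists>S y. S \<subseteq> N \<and> real (card S) \<ge> real (card N) / real k \<and> y \<in> M \<and>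
            (\<forall>i\<in>S. \<alpha> * L i S y < Min (agent_loss L X ` S)))"

definition centroid_loss :: "('a \<Rightarrow> 'a \<Rightarrow> real) \<Rightarrow> 'a \<Rightarrow> 'a set \<Rightarrow> 'a \<Rightarrow> real" where
  "centroid_loss d i C x = d i x"

definition gc_valid :: "'a set \<Rightarrow> nat \<Rightarrow> ('a \<Rightarrow> 'a \<Rightarrow> real) \<Rightarrow> 'a set \<Rightarrow> real \<Rightarrow> 'a \<Rightarrow> 'a set \<Rightarrow> bool" where
  "gc_valid N k d U \<delta> i C \<longleftrightarrow>
     i \<in> U \<and> C \<subseteq> U \<and> real (card C) \<ge> min (real (card U)) (real (card N) / real k) \<and>
     (\<forall>i'\<in>C. d i i' \<le> \<delta>)"

text \<open>gc_run N M k d U \<delta> Xs: starting from uncaptured set U with current parameter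
  value \<delta>, GC (under some tie-breaking) may form exactly the clusters Xs (in order).
  Each step happens at the least \<delta>' \<ge> \<delta> at which a valid choice exists
  (\<delta> increases continuously); any valid choice and any closest center may be taken.\<close>
inductive gc_run :: "'a set \<Rightarrow> 'a set \<Rightarrow> nat \<Rightarrow> ('a \<Rightarrow> 'a \<Rightarrow> real) \<Rightarrow> 'a set \<Rightarrow> real \<Rightarrow> ('a set \<times> 'a) list \<Rightarrow> bool"
  for N M k d where
  gc_done: "gc_run N M k d {} \<delta> []"
| gc_step: "\<lbrakk> U \<noteq> {}; \<delta> \<le> \<delta>'; gc_valid N k d U \<delta>' i C;
             \<forall>\<delta>''. \<delta> \<le> \<delta>'' \<and> \<delta>'' < \<delta>' \<longrightarrow> \<not> (\<exists>j D. gc_valid N k d U \<delta>'' j D);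
             x \<in> M; \<forall>x'\<in>M. d i x \<le> d i x';
             gc_run N M k d (U - C) \<delta>' rest \<rbrakk>
           \<Longrightarrow> gc_run N M k d U \<delta> ((C, x) # rest)"

text \<open>Output of GC: the formed clusters, padded with empty clusters (center x0 \<in> M,
  irrelevant) to k clusters.\<close>
definition gc_output :: "nat \<Rightarrow> 'a \<Rightarrow> ('a set \<times> 'a) list \<Rightarrow> ('a set \<times> 'a) list" where
  "gc_output k x0 Xs = Xs @ replicate (k - length Xs) ({}, x0)"

end

theory Submission
  imports Defs
begin

lemma gc_struct:
  assumes "gc_run N M k d U \<delta> Xs"
  shows "(\<forall>t<length Xs. fst (Xs!t) \<subseteq> U \<and> snd (Xs!t) \<in> M) \<and>
         (\<forall>t s. t < s \<longrightarrow> s < length Xs \<longrightarrow> fst (Xs!t) \<inter> fst (Xs!s) = {}) \<and>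
         \<Union>(fst ` set Xs) = U"
  using assms
proof (induction rule: gc_run.induct)
  case (gc_done \<delta>)
  then show ?case by simp
next
  case (gc_step U \<delta> \<delta>' i C x rest)
  have CU: "C \<subseteq> U" using gc_step.hyps(3) by (simp add: gc_valid_def)
  have A: "\<forall>t<length ((C,x)#rest). fst (((C,x)#rest)!t) \<subseteq> U \<and> snd (((C,x)#rest)!t) \<in> M"
  proof (intro allI impI)
    fix t assume "t < length ((C,x)#rest)"
    then show "fst (((C,x)#rest)!t) \<subseteq> U \<and> snd (((C,x)#rest)!t) \<in> M"
      using gc_step CU by (cases t) auto
  qed
  have B: "\<forall>t s. t < s \<longrightarrow> s < length ((C,x)#rest) \<longrightarrow> fst (((C,x)#rest)!t) \<inter> fst (((C,x)#rest)!s) = {}"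
  proof (intro allI impI)
    fix t s assume ts: "t < s" "s < length ((C,x)#rest)"
    then obtain s' where s': "s = Suc s'" "s' < length rest" by (cases s) auto
    show "fst (((C,x)#rest)!t) \<inter> fst (((C,x)#rest)!s) = {}"
    proof (cases t)
      case 0
      then show ?thesis using gc_step.IH s' by auto
    next
      case (Suc t')
      then show ?thesis using gc_step.IH s' ts by auto
    qed
  qed
  have "\<Union>(fst ` set ((C,x)#rest)) = U" using gc_step.IH CU by auto
  then show ?case using A B by blast
qed

lemma gc_empty: "gc_run N M k d U \<delta> Xs \<Longrightarrow> U = {} \<Longrightarrow> Xs = []"
  by (erule gc_run.cases) simp_all

lemma gc_count:
  assumes "gc_run N M k d U \<delta> Xs"
  shows "finite U \<Longrightarrow> Xs \<noteq> [] \<Longrightarrow> real (length Xs - 1) * (real (card N) / real k) < real (card U)"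
  using assms
proof (induction rule: gc_run.induct)
  case (gc_done \<delta>)
  then show ?case by simp
next
  case (gc_step U \<delta> \<delta>' i C x rest)
  have CU: "C \<subseteq> U" and cm: "real (card C) \<ge> min (real (card U)) (real (card N) / real k)"
    using gc_step.hyps(3) unfolding gc_valid_def by blast+
  have L: "length ((C,x)#rest) - 1 = length rest" by simp
  show ?case
  proof (cases "rest = []")
    case True
    have "card U > 0" using gc_step.hyps(1) gc_step.prems(1) card_gt_0_iff by blast
    then show ?thesis unfolding L using True by simp
  next
    case False
    have ne: "U - C \<noteq> {}"
    proof
      assume "U - C = {}"
      with gc_step.hyps(7) have "rest = []" using gc_empty by blast
      with False show False by simp
    qed
    have fC: "finite C" using CU gc_step.prems(1) finite_subset by blast
    have "C \<subset> U" using CU ne by blast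
    then have lt: "card C < card U" using gc_step.prems(1) psubset_card_mono by blast
    have "real (card U) \<le> real (card C) \<or> real (card N) / real k \<le> real (card C)"
      using cm min_le_iff_disj by blast
    then have q: "real (card C) \<ge> real (card N) / real k" using lt by linarith
    have cd: "card (U - C) = card U - card C" using card_Diff_subset[OF fC CU] .
    have cd': "real (card (U - C)) = real (card U) - real (card C)" using cd lt by simp
    have fin': "finite (U - C)" using gc_step.prems(1) by blast
    have IH: "real (length rest - 1) * (real (card N) / real k) < real (card (U - C))"
      using gc_step.IH[OF fin' False] .
    have L2: "length rest = Suc (length rest - 1)" using False by simp
    have e: "real (length rest) = real (length rest - 1) + 1" using L2 by (metis of_nat_Suc add.commute)
    have "real (length rest) * (real (card N) / real k)
       = real (length rest - 1) * (real (card N) / real k) + real (card N) / real k"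
      by (subst e) (simp only: distrib_right mult_1)
    then show ?thesis unfolding L using IH q cd' by linarith
  qed
qed

lemma gc_key:
  assumes "gc_run N M k d U \<delta> Xs"
  shows "pseudometric_on (N \<union> M) d \<Longrightarrow> U \<subseteq> N \<Longrightarrow> S \<subseteq> U \<Longrightarrow> S \<noteq> {} \<Longrightarrow>
    real (card S) \<ge> real (card N) / real k \<Longrightarrow> \<delta> \<le> 2 * r \<Longrightarrow>
    y \<in> M \<Longrightarrow> (\<forall>j\<in>S. d j y \<le> r) \<Longrightarrow> (\<forall>j\<in>S. \<forall>j'\<in>S. d j j' \<le> 2 * r) \<Longrightarrow>
    \<exists>t<length Xs. \<exists>i\<in>S. i \<in> fst (Xs!t) \<and> d i (snd (Xs!t)) \<le> 5 * r"
  using assms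
proof (induction rule: gc_run.induct)
  case (gc_done \<delta>)
  then show ?case by simp
next
  case (gc_step U \<delta> \<delta>' i C x rest)
  have CU: "C \<subseteq> U" and iU: "i \<in> U" and dC: "\<forall>i'\<in>C. d i i' \<le> \<delta>'"
    using gc_step.hyps(3) by (auto simp add: gc_valid_def)
  have d2: "\<delta>' \<le> 2 * r"
  proof (rule ccontr)
    assume "\<not> \<delta>' \<le> 2 * r"
    then have "\<delta> \<le> 2 * r \<and> 2 * r < \<delta>'" using gc_step.prems by simp
    with gc_step.hyps(4) have nv: "\<not> (\<exists>j D. gc_valid N k d U (2 * r) j D)" by blast
    obtain j where "j \<in> S" using gc_step.prems by blast
    then have "gc_valid N k d U (2 * r) j S" using gc_step.prems
      by (auto simp add: gc_valid_def)
    with nv show False by blast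
  qed
  show ?case
  proof (cases "S \<subseteq> U - C")
    case True
    then obtain t i' where "t < length rest" "i' \<in> S" "i' \<in> fst (rest!t)" "d i' (snd (rest!t)) \<le> 5 * r"
      using gc_step.IH gc_step.prems d2 by blast
    then show ?thesis by (intro exI[of _ "Suc t"]) auto
  next
    case False
    then obtain j where jS: "j \<in> S" and jC: "j \<in> C" using gc_step.prems by blast
    have pm: "pseudometric_on (N \<union> M) d" using gc_step.prems by simp
    have jN: "j \<in> N \<union> M" and iN: "i \<in> N \<union> M" using jC CU iU gc_step.prems by auto
    have xN: "x \<in> N \<union> M" and yN: "y \<in> N \<union> M" using gc_step.hyps(5) gc_step.prems by auto
    have "d j x \<le> d j i + d i x" using pm jN iN xN unfolding pseudometric_on_def by blast
    moreover have "d j i = d i j" using pm jN iN unfolding pseudometric_on_def by blast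
    moreover have "d i j \<le> 2 * r" using dC jC d2 by force
    moreover have "d i x \<le> d i y" using gc_step.hyps(6) gc_step.prems by blast
    moreover have "d i y \<le> d i j + d j y" using pm jN iN yN unfolding pseudometric_on_def by blast
    moreover have "d j y \<le> r" using jS gc_step.prems by blast
    ultimately have "d j x \<le> 5 * r" by linarith
    then show ?thesis using jS jC by (intro exI[of _ 0]) auto
  qed
qed

lemma union_nth: "(\<Union>t<length X. f (X!t)) = (\<Union>x\<in>set X. f x)"
  by (auto simp: set_conv_nth)

theorem mainTheorem14:
  fixes N M :: "'a set" and k :: nat and d :: "'a \<Rightarrow> 'a \<Rightarrow> real"
    and Xs :: "('a set \<times> 'a) list" and x0 :: 'a
  assumes "finite N" "N \<noteq> {}" "finite M" "M \<noteq> {}" "k > 0"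
    and "pseudometric_on (N \<union> M) d"
    and "gc_run N M k d N 0 Xs"
    and "x0 \<in> M"
  shows "is_clustering N M k (gc_output k x0 Xs) \<and>
         FJR 5 (centroid_loss d) N M k (gc_output k x0 Xs)"
proof -
  note st = gc_struct[OF assms(7)]
  define X where "X = gc_output k x0 Xs"
  have q0: "real (card N) / real k > 0" using assms by (simp add: card_gt_0_iff)
  have lenk: "length Xs \<le> k"
  proof (cases "Xs = []")
    case False
    have "real (length Xs - 1) * (real (card N) / real k) < 1 * real (card N)"
      using gc_count[OF assms(7) assms(1) False] by simp
    also have "\<dots> = real k * (real (card N) / real k)" using assms by simp
    finally have "real (length Xs - 1) < real k" using q0
      by (meson mult_less_cancel_right_pos)
    then show ?thesis by linarith
  qed simp
  have lenX: "length X = k" using lenk by (simp add: X_def gc_output_def)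
  have nthX: "\<And>t. t < k \<Longrightarrow> X!t = (if t < length Xs then Xs!t else ({}, x0))"
    using lenk by (auto simp: X_def gc_output_def nth_append)
  have disj: "\<forall>t<length X. \<forall>s<length X. t \<noteq> s \<longrightarrow> fst (X!t) \<inter> fst (X!s) = {}"
  proof (intro allI impI)
    fix t s assume h: "t < length X" "s < length X" "t \<noteq> s"
    show "fst (X!t) \<inter> fst (X!s) = {}"
    proof (cases "t < s")
      case True then show ?thesis using h st nthX lenX by auto
    next
      case False then have "s < t" using h by simp
      then have "fst (X!s) \<inter> fst (X!t) = {}" using h st nthX lenX by auto
      then show ?thesis by blast
    qed
  qed
  have setX: "set X \<subseteq> set Xs \<union> {({}, x0)}" by (auto simp: X_def gc_output_def)
  have "set Xs \<subseteq> set X" by (simp add: X_def gc_output_def)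
  have u1: "\<Union>(fst ` set X) \<subseteq> \<Union>(fst ` set Xs)"
  proof
    fix a assume "a \<in> \<Union>(fst ` set X)"
    then obtain p where p: "p \<in> set X" "a \<in> fst p" by blast
    then have "p \<in> set Xs" using setX by auto
    then show "a \<in> \<Union>(fst ` set Xs)" using p by blast
  qed
  have u2: "\<Union>(fst ` set Xs) \<subseteq> \<Union>(fst ` set X)" using \<open>set Xs \<subseteq> set X\<close> by blast
  have st3: "\<Union>(fst ` set Xs) = N" using st[THEN conjunct2, THEN conjunct2] .
  have un: "(\<Union>t<length X. fst (X!t)) = N" unfolding union_nth using u1 u2 st3 by simp
  have cen: "\<forall>t<length X. snd (X!t) \<in> M"
  proof (intro allI impI)
    fix t assume "t < length X"
    then show "snd (X!t) \<in> M" using nthX[of t] lenX st[THEN conjunct1] assms(8) by (cases "t < length Xs") auto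
  qed
  have clu: "is_clustering N M k X" unfolding is_clustering_def using lenX disj un cen by blast
  have loss: "agent_loss (centroid_loss d) X i = d i (snd (X!t))"
    if "t < length X" "i \<in> fst (X!t)" for i t
  proof -
    have "(THE t. t < length X \<and> i \<in> fst (X!t)) = t"
    proof (rule the_equality)
      show "t < length X \<and> i \<in> fst (X!t)" using that by simp
      fix t' assume "t' < length X \<and> i \<in> fst (X!t')"
      then show "t' = t" using that disj by blast
    qed
    then show ?thesis by (simp add: agent_loss_def centroid_loss_def Let_def)
  qed
  have fjr: "FJR 5 (centroid_loss d) N M k X"
    unfolding FJR_def
  proof
    assume "\<exists>S y. S \<subseteq> N \<and> real (card S) \<ge> real (card N) / real k \<and> y \<in> M \<and>
            (\<forall>i\<in>S. 5 * centroid_loss d i S y < Min (agent_loss (centroid_loss d) X ` S))"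
    then obtain S y where S: "S \<subseteq> N" "real (card S) \<ge> real (card N) / real k" "y \<in> M"
      and lt: "\<forall>i\<in>S. 5 * d i y < Min (agent_loss (centroid_loss d) X ` S)"
      by (auto simp: centroid_loss_def)
    have fS: "finite S" using S assms(1) finite_subset by blast
    have Sne: "S \<noteq> {}" using S q0 by auto
    define r where "r = Max ((\<lambda>j. d j y) ` S)"
    obtain jm where jm: "jm \<in> S" "r = d jm y"
      unfolding r_def using fS Sne by (metis (no_types, lifting) Max_in finite_imageI image_iff image_is_empty)
    have rb: "\<forall>j\<in>S. d j y \<le> r" unfolding r_def using fS by auto
    have pm: "pseudometric_on (N \<union> M) d" using assms by simp
    have r0: "0 \<le> r" using pm jm S unfolding pseudometric_on_def by auto
    have r2: "\<forall>j\<in>S. \<forall>j'\<in>S. d j j' \<le> 2 * r"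
    proof (intro ballI)
      fix j j' assume jj: "j \<in> S" "j' \<in> S"
      then have m: "j \<in> N \<union> M" "j' \<in> N \<union> M" "y \<in> N \<union> M" using S by auto
      have "d j j' \<le> d j y + d y j'" using pm m unfolding pseudometric_on_def by blast
      moreover have "d y j' = d j' y" using pm m unfolding pseudometric_on_def by blast
      moreover have "d j y \<le> r" "d j' y \<le> r" using rb jj by auto
      ultimately show "d j j' \<le> 2 * r" by linarith
    qed
    obtain t i where ti: "t < length Xs" "i \<in> S" "i \<in> fst (Xs!t)" "d i (snd (Xs!t)) \<le> 5 * r"
      using gc_key[OF assms(7) pm order_refl S(1) Sne S(2) _ S(3) rb r2] r0 by auto
    have tX: "t < length X" "X!t = Xs!t" using ti lenk lenX nthX by auto
    have "agent_loss (centroid_loss d) X i \<le> 5 * r" using loss[OF tX(1)] tX ti by simp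
    moreover have "Min (agent_loss (centroid_loss d) X ` S) \<le> agent_loss (centroid_loss d) X i"
      using fS ti by simp
    moreover have "5 * r < Min (agent_loss (centroid_loss d) X ` S)" using lt jm by auto
    ultimately show False by linarith
  qed
  show ?thesis using clu fjr by (simp add: X_def)
qed

end
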